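(* Let $0<L<\infty$, $\varphi\in(0,1)$, and $\kappa_f,\kappa_s,h_v,c_{p,f},\dot m_c,A_c,R,\mu_f,K_D,K_F,p_{HG}>0$, $T_b>0$, $q_{HG}\in\mathbb R$. Let $(T_f,T_s)$ be the unique solution on $[0,L]$ of $$-\varphi\kappa_fT_f''+c_{p,f}\frac{\dot m_c}{A_c}T_f'=h_v(T_s-T_f),\qquad (1-\varphi)\kappa_sT_s''=h_v(T_s-T_f)\quad\text{on }(0,L),$$ $$T_f(0)=T_s(0)=T_b,\quad (1-\varphi)\kappa_sT_s'(L)=q_{HG}-c_{p,f}\frac{\dot m_c}{A_c}(T_s(L)-T_f(L)),\quad T_f'(L)=\frac{h_vA_c}{c_{p,f}\dot m_c}(T_s(L)-T_f(L)).$$ Assume $q_{HG}>0$ and $$\frac{p_{HG}}{R\,T_f(L)}>\frac{\dot m_c}{\varphi A_c}\frac{1}{\sqrt{R\,T_b}}.$$ Define $$\overline N(y,\rho)=\frac{R\,(c_{p,f}\dot m_c)^{-1}h_vA_c\,\rho^2\,(T_s(y)-T_f(y))+\frac{\dot m_c}{A_c}\Big(\frac{\mu_f}{K_D}+\frac{\dot m_c}{K_FA_c}\Big)}{\varphi^{-2}\big(\frac{\dot m_c}{A_c}\big)^2-R\,T_f(y)\,\rho^2}.$$ Then the backward initial value problem $$\rho_f'(y)=\overline N(y,\rho_f(y))\,\rho_f(y),\ y\in(0,L),\qquad \rho_f(L)=\frac{p_{HG}}{R\,T_f(L)}$$ has a unique solution on $[0,L]$. In particular, this density $\rho_f$ is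 positive and strictly monotonically decreasing.
   Context: $\rho_f$ is the coolant density, $T_f,T_s$ fluid and solid temperatures, $R$ the specific gas constant, $\mu_f$ dynamic viscosity, $K_D$ permeability, $K_F$ Forchheimer coefficient, $p_{HG}$ hot gas pressure at the interface. *)

theory Defs
  imports "HOL-Analysis.Analysis"
begin

definition Nbar ::
  "real \<Rightarrow> real \<Rightarrow> real \<Rightarrow> real \<Rightarrow> real \<Rightarrow> real \<Rightarrow> real \<Rightarrow> real \<Rightarrow> real \<Rightarrow>
   (real \<Rightarrow> real) \<Rightarrow> (real \<Rightarrow> real) \<Rightarrow> real \<Rightarrow> real \<Rightarrow> real" where
  "Nbar \<phi> cpf mc Ac R \<mu>f KD KF hv Tf Ts y \<rho> =
     (R * inverse (cpf * mc) * hv * Ac * \<rho>^2 * (Ts y - Tf y)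
        + (mc / Ac) * (\<mu>f / KD + mc / (KF * Ac)))
     / (inverse (\<phi>^2) * (mc / Ac)^2 - R * Tf y * \<rho>^2)"

definition density_solution ::
  "real \<Rightarrow> real \<Rightarrow> real \<Rightarrow> real \<Rightarrow> real \<Rightarrow> real \<Rightarrow> real \<Rightarrow> real \<Rightarrow> real \<Rightarrow> real \<Rightarrow>
   (real \<Rightarrow> real) \<Rightarrow> (real \<Rightarrow> real) \<Rightarrow> real \<Rightarrow> (real \<Rightarrow> real) \<Rightarrow> bool" where
  "density_solution L \<phi> cpf mc Ac R \<mu>f KD KF hv Tf Ts \<rho>L \<rho> \<longleftrightarrow>
     continuous_on {0..L} \<rho> \<and>
     (\<forall>y\<in>{0<..<L}.
        inverse (\<phi>^2) * (mc / Ac)^2 - R * Tf y * (\<rho> y)^2 \<noteq> 0 \<and>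
        (\<rho> has_real_derivative
           (Nbar \<phi> cpf mc Ac R \<mu>f KD KF hv Tf Ts y (\<rho> y) * \<rho> y)) (at y)) \<and>
     \<rho> L = \<rho>L"

end

theory Submission
  imports Defs
begin


lemma endpoint_min_deriv:
  fixes f :: "real \<Rightarrow> real"
  assumes ab: "a < b" and mn: "\<forall>y\<in>{a..b}. f b \<le> f y"
    and d: "(f has_real_derivative D) (at b within {a..b})"
  shows "D \<le> 0"
proof -
  have "((\<lambda>y. (f y - f b) / (y - b)) \<longlongrightarrow> D) (at_left b)"
    using d ab by (simp add: has_field_derivative_iff at_within_Icc_at_left)
  moreover have "eventually (\<lambda>y. (f y - f b) / (y - b) \<le> 0) (at_left b)"
  proof -
    have "eventually (\<lambda>y. a < y \<and> y < b) (at_left b)"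
      using ab by (intro eventually_at_leftI[of a]) auto
    then show ?thesis
    proof (rule eventually_mono)
      fix y assume "a < y \<and> y < b"
      then have "f b \<le> f y" "y - b < 0" using mn by auto
      then show "(f y - f b) / (y - b) \<le> 0" by (simp add: divide_nonneg_neg)
    qed
  qed
  ultimately show ?thesis
    by (rule tendsto_upperbound) (simp add: trivial_limit_at_left_real)
qed

lemma interior_min_false:
  fixes f f' :: "real \<Rightarrow> real"
  assumes ay: "a < y0" and yb: "y0 < b" and mn: "\<forall>y\<in>{a..b}. f y0 \<le> f y"
    and df: "\<And>y. a < y \<Longrightarrow> y < b \<Longrightarrow> (f has_real_derivative f' y) (at y)"
    and ddf: "(f' has_real_derivative d) (at y0)" and dneg: "f' y0 = 0 \<Longrightarrow> d < 0"
  shows False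
proof -
  have "f' y0 = 0"
  proof (rule DERIV_local_min[OF df[OF ay yb]])
    show "0 < min (y0 - a) (b - y0)" using ay yb by simp
    show "\<forall>y. \<bar>y0 - y\<bar> < min (y0 - a) (b - y0) \<longrightarrow> f y0 \<le> f y"
    proof (intro allI impI)
      fix y assume "\<bar>y0 - y\<bar> < min (y0 - a) (b - y0)"
      then have "y \<in> {a..b}" by (auto simp: abs_less_iff)
      then show "f y0 \<le> f y" using mn by blast
    qed
  qed
  then have "d < 0" by (rule dneg)
  then obtain e where e: "e > 0" "\<And>h. h > 0 \<Longrightarrow> h < e \<Longrightarrow> f' y0 > f' (y0 + h)"
    using DERIV_neg_dec_right[OF ddf] by blast
  define h where "h = min (e/2) ((b - y0)/2)"
  have "h \<le> (b - y0)/2" "h \<le> e/2" "h > 0" using e yb unfolding h_def by (auto simp: min_def)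
  note hh = this
  have h: "h > 0" "h < e" "y0 + h < b" using hh e yb by auto
  obtain l z where z: "y0 < z" "z < y0 + h" "DERIV f z :> l" "f (y0 + h) - f y0 = (y0 + h - y0) * l"
    using MVT2[of y0 "y0 + h" f f'] h ay df
    by (smt (verit) DERIV_unique) 
  have "f' z < 0"
    using e(2)[of "z - y0"] z h \<open>f' y0 = 0\<close> by auto
  moreover have "l = f' z" using z ay h by (metis DERIV_unique df less_trans)
  ultimately have "f (y0 + h) - f y0 = h * f' z" "h * f' z < 0"
    using z h(1) by (auto simp: mult_pos_neg)
  then have "f (y0 + h) < f y0" by linarith
  moreover have "f y0 \<le> f (y0 + h)" using mn ay h by auto
  ultimately show False by simp
qed



lemma temp_lower:
  fixes L \<alpha> \<beta> a hv q Tb :: real and Tf Ts Tf' Ts' Tf'' Ts'' :: "real \<Rightarrow> real"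
  assumes L: "0 < L" and pa: "0 < \<alpha>" "0 < \<beta>" "0 < a" "0 < hv" "0 < q"
    and dTf: "\<And>y. y \<in> {0..L} \<Longrightarrow> (Tf has_real_derivative Tf' y) (at y within {0..L})"
    and dTs: "\<And>y. y \<in> {0..L} \<Longrightarrow> (Ts has_real_derivative Ts' y) (at y within {0..L})"
    and ddTf: "\<And>y. y \<in> {0<..<L} \<Longrightarrow> (Tf' has_real_derivative Tf'' y) (at y)"
    and ddTs: "\<And>y. y \<in> {0<..<L} \<Longrightarrow> (Ts' has_real_derivative Ts'' y) (at y)"
    and odef: "\<And>y. y \<in> {0<..<L} \<Longrightarrow> \<alpha> * Tf'' y = a * Tf' y - hv * (Ts y - Tf y)"
    and odes: "\<And>y. y \<in> {0<..<L} \<Longrightarrow> \<beta> * Ts'' y = hv * (Ts y - Tf y)"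
    and bc0: "Tf 0 = Tb" "Ts 0 = Tb"
    and bcs: "\<beta> * Ts' L = q - a * (Ts L - Tf L)"
    and bcf: "a * Tf' L = hv * (Ts L - Tf L)"
  shows "\<forall>y\<in>{0..L}. Tb \<le> Tf y"
proof -
  have ctf: "continuous_on {0..L} Tf" using dTf by (rule DERIV_continuous_on)
  have cts: "continuous_on {0..L} Ts" using dTs by (rule DERIV_continuous_on)
  have dTfa: "(Tf has_real_derivative Tf' y) (at y)" if "0 < y" "y < L" for y
    using dTf[of y] that by (simp add: at_within_Icc_at)
  have dTsa: "(Ts has_real_derivative Ts' y) (at y)" if "0 < y" "y < L" for y
    using dTs[of y] that by (simp add: at_within_Icc_at)
  have key: "0 \<le> Tf y - Tb + \<epsilon> * (y * (3 * L - y))" if eps: "\<epsilon> > 0" and yI: "y \<in> {0..L}" for \<epsilon> y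
  proof -
    define U where "U = (\<lambda>y. Tf y - Tb + \<epsilon> * (y * (3 * L - y)))"
    define V where "V = (\<lambda>y. Ts y - Tb + \<epsilon> * (y * (3 * L - y)))"
    define H where "H = (\<lambda>y. min (U y) (V y))"
    have UV: "Ts y - Tf y = V y - U y" for y by (simp add: U_def V_def)
    have "continuous_on {0..L} H" unfolding H_def U_def V_def
      by (intro continuous_intros ctf cts)
    then obtain y0 where y0: "y0 \<in> {0..L}" "\<forall>y\<in>{0..L}. H y0 \<le> H y"
      using continuous_attains_inf[OF compact_Icc, of 0 L H] L by auto
    have dU: "(U has_real_derivative (Tf' y + \<epsilon> * (3 * L - 2 * y))) (at y within {0..L})"
      if "y \<in> {0..L}" for y
      unfolding U_def using dTf[OF that]
      by (auto intro!: derivative_eq_intros simp: algebra_simps)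
    have dV: "(V has_real_derivative (Ts' y + \<epsilon> * (3 * L - 2 * y))) (at y within {0..L})"
      if "y \<in> {0..L}" for y
      unfolding V_def using dTs[OF that]
      by (auto intro!: derivative_eq_intros simp: algebra_simps)
    have dUa: "(U has_real_derivative (Tf' y + \<epsilon> * (3 * L - 2 * y))) (at y)"
      if "0 < y" "y < L" for y
      using dU[of y] that by (simp add: at_within_Icc_at)
    have dVa: "(V has_real_derivative (Ts' y + \<epsilon> * (3 * L - 2 * y))) (at y)"
      if "0 < y" "y < L" for y
      using dV[of y] that by (simp add: at_within_Icc_at)
    have dU': "((\<lambda>y. Tf' y + \<epsilon> * (3 * L - 2 * y)) has_real_derivative (Tf'' y - 2 * \<epsilon>)) (at y)"
      if "0 < y" "y < L" for y
      using ddTf[of y] that by (auto intro!: derivative_eq_intros simp: algebra_simps)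
    have dV': "((\<lambda>y. Ts' y + \<epsilon> * (3 * L - 2 * y)) has_real_derivative (Ts'' y - 2 * \<epsilon>)) (at y)"
      if "0 < y" "y < L" for y
      using ddTs[of y] that by (auto intro!: derivative_eq_intros simp: algebra_simps)
    have "0 \<le> H y0"
    proof (rule ccontr)
      assume neg: "\<not> 0 \<le> H y0"
      have "y0 \<noteq> 0" using neg bc0 by (auto simp: H_def U_def V_def)
      then have y0pos: "0 < y0" using y0 by auto
      show False
      proof (cases "U y0 \<le> V y0")
        case True
        have mn: "\<forall>y\<in>{0..L}. U y0 \<le> U y"
          using y0(2) True by (force simp: H_def)
        show False
        proof (cases "y0 = L")
          case True
          have "Tf' L + \<epsilon> * (3 * L - 2 * L) \<le> 0"
            using endpoint_min_deriv[OF L _ dU[of L]] mn True L by auto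
          moreover have "0 \<le> a * Tf' L" using bcf UV[of L] True \<open>U y0 \<le> V y0\<close> pa by simp
          then have "0 \<le> Tf' L" using pa by (simp add: zero_le_mult_iff)
          moreover have "0 < \<epsilon> * L" using eps L by simp
          moreover have "\<epsilon> * (3 * L - 2 * L) = \<epsilon> * L" by (simp add: algebra_simps)
          ultimately show False by linarith
        next
          case False
          then have y0L: "y0 < L" using y0 by auto
          show False
          proof (rule interior_min_false[OF y0pos y0L mn dUa dU'[OF y0pos y0L]])
            show "0 < y" if "0 < y" for y using that .
            assume h0: "Tf' y0 + \<epsilon> * (3 * L - 2 * y0) = 0"
            have "0 < \<epsilon> * (3 * L - 2 * y0)" using eps y0L L by simp
            then have "a * Tf' y0 < 0" using h0 pa by (simp add: mult_pos_neg)
            moreover have "0 \<le> hv * (Ts y0 - Tf y0)" using UV[of y0] \<open>U y0 \<le> V y0\<close> pa by simp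
            ultimately have "\<alpha> * Tf'' y0 < 0" using odef[of y0] y0pos y0L by simp
            then have "Tf'' y0 < 0" using pa by (simp add: mult_less_0_iff)
            then show "Tf'' y0 - 2 * \<epsilon> < 0" using eps by simp
          qed simp_all
        qed
      next
        case False
        have mn: "\<forall>y\<in>{0..L}. V y0 \<le> V y"
          using y0(2) False by (force simp: H_def)
        show False
        proof (cases "y0 = L")
          case True
          have "Ts' L + \<epsilon> * (3 * L - 2 * L) \<le> 0"
            using endpoint_min_deriv[OF L _ dV[of L]] mn True L by auto
          moreover have "a * (V L - U L) < 0" using True \<open>\<not> U y0 \<le> V y0\<close> pa
            by (simp add: mult_pos_neg)
          then have "0 < \<beta> * Ts' L" using bcs UV[of L] pa by simp
          then have "0 < Ts' L" using pa by (simp add: zero_less_mult_iff)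
          moreover have "0 < \<epsilon> * L" using eps L by simp
          moreover have "\<epsilon> * (3 * L - 2 * L) = \<epsilon> * L" by (simp add: algebra_simps)
          ultimately show False by linarith
        next
          case False
          then have y0L: "y0 < L" using y0 by auto
          show False
          proof (rule interior_min_false[OF y0pos y0L mn dVa dV'[OF y0pos y0L]])
            have "hv * (Ts y0 - Tf y0) < 0" using UV[of y0] \<open>\<not> U y0 \<le> V y0\<close> pa
              by (simp add: mult_pos_neg)
            then have "\<beta> * Ts'' y0 < 0" using odes[of y0] y0pos y0L by simp
            then have "Ts'' y0 < 0" using pa by (simp add: mult_less_0_iff)
            then show "Ts'' y0 - 2 * \<epsilon> < 0" using eps by simp
          qed simp_all
        qed
      qed
    qed
    moreover have "H y0 \<le> H y" using y0(2) yI by blast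
    ultimately have "0 \<le> H y" by linarith
    then show ?thesis by (simp add: H_def U_def)
  qed
  show ?thesis
  proof
    fix y assume yI: "y \<in> {0..L}"
    show "Tb \<le> Tf y"
    proof (rule ccontr)
      assume "\<not> Tb \<le> Tf y"
      then have d: "0 < Tb - Tf y" by simp
      define \<epsilon> where "\<epsilon> = (Tb - Tf y) / (2 * (3 * L * L + 1))"
      have "0 < 2 * (3 * L * L + 1)" using L by (simp add: add_pos_nonneg)
      then have eps: "\<epsilon> > 0" using d unfolding \<epsilon>_def by (rule divide_pos_pos[rotated])
      have p1: "y*(3*L-y) = 3*L*y - y*y" by (simp add: algebra_simps)
      have p2: "3*L*y \<le> 3*L*L" using yI L by (intro mult_left_mono) auto
      have p3: "0 \<le> y*y" by simp
      have p: "y * (3 * L - y) \<le> 3 * L * L" using p1 p2 p3 by linarith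
      have "\<epsilon> * (y * (3 * L - y)) \<le> \<epsilon> * (3 * L * L)"
        using p eps by (simp add: mult_left_mono)
      also have "\<dots> = (Tb - Tf y) * (3*L*L / (2*(3*L*L+1)))" by (simp add: \<epsilon>_def)
      also have "\<dots> < (Tb - Tf y) * 1"
      proof (rule mult_strict_left_mono[OF _ d])
        have "0 \<le> 3*L*L" by simp
        then have pos: "0 < 2*(3*L*L+1)" by (smt (verit))
        from \<open>0 \<le> 3*L*L\<close> have lt: "3*L*L < 2*(3*L*L+1)" by (smt (verit))
        show "3*L*L / (2*(3*L*L+1)) < 1" using divide_less_eq_1_pos[OF pos] lt by blast
      qed
      finally have "\<epsilon> * (y * (3 * L - y)) < Tb - Tf y" by simp
      then show False using key[OF eps yI] by linarith
    qed
  qed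
qed



lemma temp_theta:
  fixes L \<alpha> \<beta> a hv q Tb :: real and Tf Ts Tf' Ts' Tf'' Ts'' :: "real \<Rightarrow> real"
  assumes L: "0 < L" and pa: "0 < \<alpha>" "0 < \<beta>" "0 < a" "0 < hv" "0 < q"
    and dTf: "\<And>y. y \<in> {0..L} \<Longrightarrow> (Tf has_real_derivative Tf' y) (at y within {0..L})"
    and dTs: "\<And>y. y \<in> {0..L} \<Longrightarrow> (Ts has_real_derivative Ts' y) (at y within {0..L})"
    and ddTf: "\<And>y. y \<in> {0<..<L} \<Longrightarrow> (Tf' has_real_derivative Tf'' y) (at y)"
    and ddTs: "\<And>y. y \<in> {0<..<L} \<Longrightarrow> (Ts' has_real_derivative Ts'' y) (at y)"
    and odef: "\<And>y. y \<in> {0<..<L} \<Longrightarrow> \<alpha> * Tf'' y = a * Tf' y - hv * (Ts y - Tf y)"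
    and odes: "\<And>y. y \<in> {0<..<L} \<Longrightarrow> \<beta> * Ts'' y = hv * (Ts y - Tf y)"
    and bc0: "Tf 0 = Tb" "Ts 0 = Tb"
    and bcs: "\<beta> * Ts' L = q - a * (Ts L - Tf L)"
    and bcf: "a * Tf' L = hv * (Ts L - Tf L)"
  shows "\<forall>y\<in>{0..L}. Tf y \<le> Ts y"
proof -
  have ctf: "continuous_on {0..L} Tf" using dTf by (rule DERIV_continuous_on)
  have cts: "continuous_on {0..L} Ts" using dTs by (rule DERIV_continuous_on)
  have dTfa: "(Tf has_real_derivative Tf' y) (at y)" if "0 < y" "y < L" for y
    using dTf[of y] that by (simp add: at_within_Icc_at)
  have dTsa: "(Ts has_real_derivative Ts' y) (at y)" if "0 < y" "y < L" for y
    using dTs[of y] that by (simp add: at_within_Icc_at)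
  define \<theta> where "\<theta> = (\<lambda>y. Ts y - Tf y)"
  have "continuous_on {0..L} \<theta>" unfolding \<theta>_def by (intro continuous_intros ctf cts)
  then obtain y0 where y0: "y0 \<in> {0..L}" "\<forall>y\<in>{0..L}. \<theta> y0 \<le> \<theta> y"
    using continuous_attains_inf[OF compact_Icc, of 0 L \<theta>] L by auto
  define m where "m = \<theta> y0"
  have mle: "m \<le> \<theta> y" if "y \<in> {0..L}" for y using y0 that by (simp add: m_def)
  have "0 \<le> m"
  proof (rule ccontr)
    assume "\<not> 0 \<le> m"
    then have mneg: "m < 0" by simp
    have hvm: "hv * m < 0" using mneg pa by (simp add: mult_pos_neg)
    have "y0 \<noteq> 0" using mneg bc0 by (auto simp: m_def \<theta>_def)
    then have y0pos: "0 < y0" using y0 by auto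
    show False
    proof (cases "y0 = L")
      case True
      have dth: "(\<theta> has_real_derivative (Ts' L - Tf' L)) (at L within {0..L})"
        unfolding \<theta>_def using dTs[of L] dTf[of L] L by (auto intro!: derivative_eq_intros)
      have "Ts' L - Tf' L \<le> 0"
        using endpoint_min_deriv[OF L _ dth] y0 True by auto
      moreover have "a * m < 0" using mneg pa by (simp add: mult_pos_neg)
      then have "0 < \<beta> * Ts' L" using bcs True pa by (simp add: m_def \<theta>_def)
      then have "0 < Ts' L" using pa by (simp add: zero_less_mult_iff)
      moreover have "a * Tf' L < 0" using bcf hvm True by (simp add: m_def \<theta>_def)
      then have "Tf' L < 0" using pa by (simp add: mult_less_0_iff)
      ultimately show False by linarith
    next
      case False
      then have y0L: "y0 < L" using y0 by auto
      have claimG: "hv * m \<le> a * Tf' y" if yI: "0 < y" "y < L" for y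
      proof (rule ccontr)
        assume "\<not> hv * m \<le> a * Tf' y"
        then have g1: "a * Tf' y - hv * m < 0" by simp
        define c where "c = a / \<alpha>"
        have c: "0 < c" using pa by (simp add: c_def)
        define g where "g = (\<lambda>x. (a * Tf' x - hv * m) * exp (- c * x))"
        have dg: "(g has_real_derivative
            (a * Tf'' x * exp (- c * x) + (a * Tf' x - hv * m) * (exp (- c * x) * (- c))))
            (at x)" if "0 < x" "x < L" for x
          unfolding g_def using ddTf[of x] that
          by (auto intro!: derivative_eq_intros simp: algebra_simps)
        have dgneg: "a * Tf'' x * exp (- c * x) + (a * Tf' x - hv * m) * (exp (- c * x) * (- c)) \<le> 0"
          if "0 < x" "x < L" for x
        proof -
          have e: "\<alpha> * Tf'' x - a * Tf' x + hv * m \<le> 0"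
            using odef[of x] that mle[of x] pa by (simp add: \<theta>_def mult_left_mono)
          have "a * Tf'' x * exp (- c * x) + (a * Tf' x - hv * m) * (exp (- c * x) * (- c))
              = (c * exp (- c * x)) * (\<alpha> * Tf'' x - a * Tf' x + hv * m)"
            using pa by (simp add: c_def field_simps)
          also have "\<dots> \<le> 0" using e c by (simp add: mult_nonneg_nonpos)
          finally show ?thesis .
        qed
        define \<delta> where "\<delta> = - (g y * exp (c * y))"
        have gy: "g y < 0" using g1 by (simp add: g_def mult_neg_pos)
        have \<delta>: "0 < \<delta>" using gy by (simp add: \<delta>_def mult_neg_pos)
        have bnd: "a * Tf' x - hv * m \<le> - \<delta>" if "y \<le> x" "x < L" for x
        proof -
          have "g x \<le> g y"
            using DERIV_nonpos_imp_nonincreasing[of y x g] that yI dg dgneg by force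
          have "a * Tf' x - hv * m = g x * exp (c * x)"
            by (simp add: g_def mult_exp_exp)
          also have "\<dots> \<le> g y * exp (c * x)"
            using \<open>g x \<le> g y\<close> by (simp add: mult_right_mono)
          also have "\<dots> \<le> g y * exp (c * y)"
            using gy that c by (intro mult_left_mono_neg) (auto simp: mult_left_mono)
          finally show ?thesis by (simp add: \<delta>_def)
        qed
        define k where "k = (\<lambda>x. a * Tf x - (hv * m - \<delta>) * x)"
        have kdec: "k L \<le> k x" if "x \<in> {y..L}" for x
        proof (rule DERIV_nonpos_imp_decreasing_open[of x L k])
          show "x \<le> L" using that by simp
          show "continuous_on {x..L} k" unfolding k_def
            by (intro continuous_intros continuous_on_subset[OF ctf]) (use that yI in auto)
          fix z assume z: "x < z" "z < L"
          have "(k has_real_derivative (a * Tf' z - (hv * m - \<delta>))) (at z)"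
            unfolding k_def using dTfa[of z] z that yI
            by (auto intro!: derivative_eq_intros)
          moreover have "a * Tf' z - (hv * m - \<delta>) \<le> 0" using bnd[of z] z that by auto
          ultimately show "\<exists>l. (k has_real_derivative l) (at z) \<and> l \<le> 0" by blast
        qed
        have dkL: "(k has_real_derivative (a * Tf' L - (hv * m - \<delta>))) (at L within {y..L})"
          unfolding k_def using DERIV_subset[OF dTf[of L], of "{y..L}"] L yI
          by (auto intro!: derivative_eq_intros)
        have "a * Tf' L - (hv * m - \<delta>) \<le> 0"
          using endpoint_min_deriv[OF yI(2) _ dkL] kdec by auto
        moreover have "hv * m \<le> a * Tf' L"
          using bcf mle[of L] L pa by (simp add: \<theta>_def mult_left_mono)
        ultimately show False using \<delta> by linarith
      qed
      show False
      proof (rule interior_min_false[of 0 y0 L \<theta> "\<lambda>y. Ts' y - Tf' y" "Ts'' y0 - Tf'' y0"])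
        show "0 < y0" "y0 < L" by fact+
        show "\<forall>y\<in>{0..L}. \<theta> y0 \<le> \<theta> y" using y0 by blast
        show "(\<theta> has_real_derivative Ts' y - Tf' y) (at y)" if "0 < y" "y < L" for y
          unfolding \<theta>_def using dTsa[OF that] dTfa[OF that] by (auto intro!: derivative_eq_intros)
        show "((\<lambda>y. Ts' y - Tf' y) has_real_derivative Ts'' y0 - Tf'' y0) (at y0)"
          using ddTs[of y0] ddTf[of y0] y0pos y0L by (auto intro!: derivative_eq_intros)
        have "\<beta> * Ts'' y0 < 0" using odes[of y0] y0pos y0L hvm by (simp add: m_def \<theta>_def)
        then have "Ts'' y0 < 0" using pa by (simp add: mult_less_0_iff)
        moreover have "0 \<le> \<alpha> * Tf'' y0" using odef[of y0] y0pos y0L claimG[OF y0pos y0L]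
          by (simp add: m_def \<theta>_def)
        then have "0 \<le> Tf'' y0" using pa by (simp add: zero_le_mult_iff)
        ultimately show "Ts'' y0 - Tf'' y0 < 0" by linarith
      qed
    qed
  qed
  then show ?thesis using mle by (force simp: \<theta>_def)
qed



definition Fa :: "real \<Rightarrow> real \<Rightarrow> real \<Rightarrow> real \<Rightarrow> real \<Rightarrow> real \<Rightarrow> real" where
  "Fa Kc th M A2 q r = (Kc * r^2 * th + M) / (A2 - q * r^2) * r"

lemma Fa_denom:
  fixes q \<gamma> A2 r0 r :: real
  assumes "0 < q" "0 < \<gamma>" "\<gamma> \<le> 1" "A2 \<le> (1 - \<gamma>) * q * r0^2" "0 < r0" "r0 \<le> r"
  shows "\<gamma> * q * r^2 \<le> - (A2 - q * r^2)"
proof -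
  have "r0^2 \<le> r^2" using power_mono[of r0 r 2] assms by simp
  then have "(1 - \<gamma>) * q * r0^2 \<le> (1 - \<gamma>) * q * r^2"
    using assms by (intro mult_left_mono) auto
  then have "A2 \<le> (1 - \<gamma>) * q * r^2" using assms by linarith
  then show ?thesis by (simp add: algebra_simps)
qed

lemma Fa_neg:
  fixes q \<gamma> A2 r0 r Kc th M :: real
  assumes "0 < q" "0 < \<gamma>" "\<gamma> \<le> 1" "A2 \<le> (1 - \<gamma>) * q * r0^2" "0 < r0" "r0 \<le> r"
    and "0 \<le> Kc" "0 \<le> th" "0 < M"
  shows "Fa Kc th M A2 q r < 0"
proof -
  have "\<gamma> * q * r^2 \<le> - (A2 - q * r^2)" using Fa_denom assms by blast
  moreover have "0 < \<gamma> * q * r^2" using assms by simp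
  ultimately have d: "A2 - q * r^2 < 0" by linarith
  have "0 < Kc * r^2 * th + M" using assms by (simp add: add_nonneg_pos)
  then have "(Kc * r^2 * th + M) / (A2 - q * r^2) < 0" using d by (simp add: divide_pos_neg)
  moreover have "0 < r" using assms by linarith
  ultimately show ?thesis unfolding Fa_def by (rule mult_neg_pos)
qed

lemma Fa_lip:
  fixes q qm \<gamma> A2 r0 r1 r2 Kc th B M :: real
  assumes q: "qm \<le> q" "0 < qm" and g: "0 < \<gamma>" "\<gamma> \<le> 1"
    and A: "0 \<le> A2" "A2 \<le> (1 - \<gamma>) * qm * r0^2"
    and r0: "0 < r0" "r0 \<le> r1" "r0 \<le> r2"
    and Kc: "0 \<le> Kc" and th: "0 \<le> th" "th \<le> B" and M: "0 \<le> M"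
  shows "\<bar>Fa Kc th M A2 q r1 - Fa Kc th M A2 q r2\<bar>
     \<le> (Kc * B / qm + (Kc * B * A2 / qm + M) * (A2 / (\<gamma> * qm * r0^2)^2 + 1 / (\<gamma>^2 * qm * r0^2)))
         * \<bar>r1 - r2\<bar>"
proof -
  define Hc where "Hc = A2 / (\<gamma> * qm * r0^2)^2 + 1 / (\<gamma>^2 * qm * r0^2)"
  define P where "P = Kc * th"
  have P: "0 \<le> P" "P \<le> Kc * B" using Kc th by (auto simp: P_def mult_left_mono)
  have qpos: "0 < q" using q by linarith
  have "(1 - \<gamma>) * qm * r0^2 \<le> (1 - \<gamma>) * q * r0^2"
    using q g by (intro mult_right_mono mult_left_mono) auto
  then have A': "A2 \<le> (1 - \<gamma>) * q * r0^2" using A by linarith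
  have r1p: "0 < r1" and r2p: "0 < r2" using r0 by linarith+
  have Q1: "\<gamma> * q * r1^2 \<le> - (A2 - q * r1^2)" by (rule Fa_denom[OF qpos g A' r0(1) r0(2)])
  have Q2: "\<gamma> * q * r2^2 \<le> - (A2 - q * r2^2)" by (rule Fa_denom[OF qpos g A' r0(1) r0(3)])
  have g1: "0 < \<gamma> * q * r1^2" and g2: "0 < \<gamma> * q * r2^2" using g qpos r1p r2p by simp_all
  have n1: "A2 - q * r1^2 \<noteq> 0" and n2: "A2 - q * r2^2 \<noteq> 0" using Q1 Q2 g1 g2 by linarith+
  define h where "h = (\<lambda>r::real. r / (A2 - q * r^2))"
  have dec: "Fa Kc th M A2 q r = - (P / q) * r + (P * A2 / q + M) * h r" if "A2 - q * r^2 \<noteq> 0" for r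
    using that qpos unfolding Fa_def h_def P_def by (simp add: field_simps; simp add: algebra_simps power2_eq_square)
  define s where "s = r1 * r2"
  have hd: "h r1 - h r2 = (r1 - r2) * (A2 + q * s) / ((A2 - q * r1^2) * (A2 - q * r2^2))"
    using n1 n2 unfolding h_def s_def by (simp add: field_simps; simp add: algebra_simps power2_eq_square)
  define D where "D = (- (A2 - q * r1^2)) * (- (A2 - q * r2^2))"
  have Dge: "(\<gamma> * q * s)^2 \<le> D"
  proof -
    have "(\<gamma> * q * s)^2 = (\<gamma> * q * r1^2) * (\<gamma> * q * r2^2)"
      by (simp add: s_def power2_eq_square)
    also have "\<dots> \<le> D" unfolding D_def using Q1 Q2 g1 g2 by (intro mult_mono) auto
    finally show ?thesis .
  qed
  have spos: "0 < s" using r1p r2p by (simp add: s_def)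
  have Dpos: "0 < D" using Dge spos g qpos by (smt (verit) zero_less_power2 mult_pos_pos)
  define u where "u = q / qm"
  define v where "v = s / r0^2"
  have u1: "1 \<le> u" using q by (simp add: u_def)
  have "r0 * r0 \<le> r1 * r2" using r0 by (intro mult_mono) auto
  then have v1: "1 \<le> v" using r0 by (simp add: v_def s_def power2_eq_square)
  have uv1: "1 \<le> u * v" using u1 v1 by (metis mult_mono' mult_1 zero_le_one)
  have eqH: "Hc * (\<gamma> * q * s)^2 = A2 * (u * v)^2 + q * s * (u * v)"
    using g q r0 unfolding Hc_def u_def v_def by (simp add: field_simps power2_eq_square)
  have "A2 \<le> A2 * (u * v)^2"
  proof -
    have "1 \<le> (u * v)^2" using uv1 by (simp add: one_le_power)
    then show ?thesis using A by (simp add: mult_le_cancel_left1)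
  qed
  moreover have "q * s \<le> q * s * (u * v)"
  proof -
    have "0 \<le> q * s" using qpos spos by simp
    then show ?thesis using mult_left_mono[OF uv1, of "q * s"] by simp
  qed
  ultimately have num: "A2 + q * s \<le> Hc * (\<gamma> * q * s)^2" using eqH by linarith
  have Hc0: "0 \<le> Hc" unfolding Hc_def using A g q r0 by simp
  have habs: "\<bar>h r1 - h r2\<bar> \<le> Hc * \<bar>r1 - r2\<bar>"
  proof -
    have "(A2 - q * r1^2) * (A2 - q * r2^2) = D" by (simp add: D_def algebra_simps)
    then have "\<bar>h r1 - h r2\<bar> = \<bar>r1 - r2\<bar> * (A2 + q * s) / D"
      using hd Dpos A qpos spos by (simp add: abs_mult abs_div)
    also have "\<dots> \<le> \<bar>r1 - r2\<bar> * (Hc * D) / D"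
    proof -
      have "A2 + q * s \<le> Hc * D" using num Dge Hc0 by (meson mult_left_mono order_trans)
      then show ?thesis using Dpos by (intro divide_right_mono mult_left_mono) auto
    qed
    also have "\<dots> = Hc * \<bar>r1 - r2\<bar>" using Dpos by simp
    finally show ?thesis .
  qed
  have c1: "P / q \<le> Kc * B / qm"
    using P q qpos by (meson frac_le mult_nonneg_nonneg Kc th order_trans)
  have c2: "P * A2 / q + M \<le> Kc * B * A2 / qm + M"
  proof -
    have "P * A2 / q \<le> Kc * B * A2 / qm"
      using P q qpos A by (intro frac_le mult_right_mono) (auto intro: mult_nonneg_nonneg order_trans[OF Kc])
    then show ?thesis by simp
  qed
  have c20: "0 \<le> P * A2 / q + M" using P A qpos M by simp
  have "Fa Kc th M A2 q r1 - Fa Kc th M A2 q r2 = - (P / q) * (r1 - r2) + (P * A2 / q + M) * (h r1 - h r2)"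
  proof -
    have ring: "\<And>a c x1 x2 y1 y2::real. (- a * x1 + c * y1) - (- a * x2 + c * y2) = - a * (x1 - x2) + c * (y1 - y2)"
      by (simp add: algebra_simps)
    show ?thesis unfolding dec[OF n1] dec[OF n2] by (rule ring)
  qed
  note eqF = this
  have "\<bar>Fa Kc th M A2 q r1 - Fa Kc th M A2 q r2\<bar> \<le> (P / q) * \<bar>r1 - r2\<bar> + (P * A2 / q + M) * \<bar>h r1 - h r2\<bar>"
  proof -
    have pq: "0 \<le> P / q" using P qpos by simp
    have "\<bar>- (P / q) * (r1 - r2) + (P * A2 / q + M) * (h r1 - h r2)\<bar>
        \<le> \<bar>- (P / q) * (r1 - r2)\<bar> + \<bar>(P * A2 / q + M) * (h r1 - h r2)\<bar>"
      by (rule abs_triangle_ineq)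
    also have "\<dots> = (P / q) * \<bar>r1 - r2\<bar> + (P * A2 / q + M) * \<bar>h r1 - h r2\<bar>"
      using pq c20 P qpos by (simp add: abs_mult)
    finally show ?thesis by (simp only: eqF)
  qed
  also have "\<dots> \<le> (Kc * B / qm) * \<bar>r1 - r2\<bar> + (Kc * B * A2 / qm + M) * (Hc * \<bar>r1 - r2\<bar>)"
    using c1 c2 habs c20 P qpos q by (intro add_mono mult_mono) auto
  also have "\<dots> = (Kc * B / qm + (Kc * B * A2 / qm + M) * Hc) * \<bar>r1 - r2\<bar>"
    by (simp add: algebra_simps)
  finally show ?thesis by (simp add: Hc_def)
qed



lemma exp_integral:
  fixes lam L x :: real
  assumes "0 < lam" "x \<le> L"
  shows "((\<lambda>s. exp (lam * (L - s))) has_integral ((exp (lam * (L - x)) - 1) / lam)) {x..L}"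
proof -
  have "((\<lambda>s. exp (lam * (L - s))) has_integral
        ((\<lambda>s. - exp (lam * (L - s)) / lam) L - (\<lambda>s. - exp (lam * (L - s)) / lam) x)) {x..L}"
  proof (rule fundamental_theorem_of_calculus[OF assms(2)])
    fix s assume "s \<in> {x..L}"
    have "((\<lambda>s. - exp (lam * (L - s)) / lam) has_real_derivative exp (lam * (L - s))) (at s within {x..L})"
      using assms(1) by (auto intro!: derivative_eq_intros)
    then show "((\<lambda>s. - exp (lam * (L - s)) / lam) has_vector_derivative exp (lam * (L - s))) (at s within {x..L})"
      by (simp add: has_real_derivative_iff_has_vector_derivative)
  qed
  moreover have "(\<lambda>s. - exp (lam * (L - s)) / lam) L - (\<lambda>s. - exp (lam * (L - s)) / lam) x
      = (exp (lam * (L - x)) - 1) / lam"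
    by (simp add: diff_divide_distrib)
  ultimately show ?thesis by simp
qed

lemma ivp_exists:
  fixes G :: "real \<Rightarrow> real \<Rightarrow> real" and L K \<rho>L :: real
  assumes L: "0 < L" and K: "0 \<le> K"
    and Gcont: "\<And>\<rho>. continuous_on {0..L} \<rho> \<Longrightarrow> continuous_on {0..L} (\<lambda>s. G s (\<rho> s))"
    and Glip: "\<And>s r1 r2. s \<in> {0..L} \<Longrightarrow> \<bar>G s r1 - G s r2\<bar> \<le> K * \<bar>r1 - r2\<bar>"
  shows "\<exists>\<rho>. continuous_on {0..L} \<rho> \<and> (\<forall>y\<in>{0..L}. \<rho> y = \<rho>L - integral {y..L} (\<lambda>s. G s (\<rho> s)))"
proof -
  define lam where "lam = 2 * K + 1"
  have lam: "0 < lam" "2 * K \<le> lam" using K by (auto simp: lam_def)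
  define w where "w = (\<lambda>y::real. exp (- lam * (L - y)))"
  define cl where "cl = (\<lambda>y::real. max 0 (min L y))"
  have clI: "cl y \<in> {0..L}" for y using L by (auto simp: cl_def)
  have cl_id: "cl y = y" if "y \<in> {0..L}" for y using that by (auto simp: cl_def)
  have ccl: "continuous_on UNIV cl" unfolding cl_def by (intro continuous_intros)
  have cw: "continuous_on S w" for S unfolding w_def by (intro continuous_intros)
  have wpos: "0 < w y" for y by (simp add: w_def)
  have wne: "w y \<noteq> 0" for y using wpos[of y] by simp
  have wexp: "w s * exp (lam * (L - s)) = 1" for s
  proof -
    have "w s * exp (lam * (L - s)) = exp (- (lam * (L - s))) * exp (lam * (L - s))"
      by (simp add: w_def)
    also have "\<dots> = 1" by (simp add: exp_minus)
    finally show ?thesis .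
  qed
  have wdiv: "d / w s = d * exp (lam * (L - s))" for d s
  proof -
    have "d / w s = d * (w s * exp (lam * (L - s))) / w s" using wexp[of s] by simp
    also have "\<dots> = d * exp (lam * (L - s))" using wne[of s] by simp
    finally show ?thesis .
  qed
  have cdiv: "continuous_on S (\<lambda>s. apply_bcontfun \<eta> s / w s)" for S :: "real set" and \<eta> :: "real \<Rightarrow>\<^sub>C real"
  proof (rule continuous_on_divide)
    show "continuous_on S (apply_bcontfun \<eta>)" by simp
    show "continuous_on S w" by (rule cw)
    show "\<forall>x\<in>S. w x \<noteq> 0" using wne by blast
  qed
  define T where "T = (\<lambda>(\<eta>::real \<Rightarrow>\<^sub>C real) y. w y * (\<rho>L - integral {y..L} (\<lambda>s. G s (apply_bcontfun \<eta> s / w s))))"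
  have gcont: "continuous_on {0..L} (\<lambda>s. G s (apply_bcontfun \<eta> s / w s))" for \<eta>
    by (rule Gcont[OF cdiv])
  have Tcont: "continuous_on {0..L} (T \<eta>)" for \<eta>
  proof -
    have "continuous_on {0..L} (\<lambda>y. integral {y..L} (\<lambda>s. G s (apply_bcontfun \<eta> s / w s)))"
      by (rule indefinite_integral_continuous_1'[OF integrable_continuous_interval[OF gcont]])
    then show ?thesis unfolding T_def by (intro continuous_intros cw)
  qed
  have Tin: "(\<lambda>y. T \<eta> (cl y)) \<in> bcontfun" for \<eta>
  proof -
    have c: "continuous_on UNIV (\<lambda>y. T \<eta> (cl y))"
      by (rule continuous_on_compose2[OF Tcont[of \<eta>] ccl]) (use clI in auto)
    have "range (\<lambda>y. T \<eta> (cl y)) \<subseteq> T \<eta> ` {0..L}" using clI by auto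
    moreover have "bounded (T \<eta> ` {0..L})"
      by (intro compact_imp_bounded compact_continuous_image Tcont compact_Icc)
    ultimately have "bounded (range (\<lambda>y. T \<eta> (cl y)))" by (rule bounded_subset[rotated])
    then show ?thesis using c by (simp add: bcontfun_def)
  qed
  define \<Phi> where "\<Phi> = (\<lambda>\<eta>. Bcontfun (\<lambda>y. T \<eta> (cl y)))"
  have \<Phi>app: "apply_bcontfun (\<Phi> \<eta>) y = T \<eta> (cl y)" for \<eta> y
    unfolding \<Phi>_def using Tin[of \<eta>] by (simp add: Bcontfun_inverse)
  have contr: "dist (\<Phi> \<eta>1) (\<Phi> \<eta>2) \<le> (1/2) * dist \<eta>1 \<eta>2" for \<eta>1 \<eta>2
  proof (rule dist_bound)
    fix y
    define x where "x = cl y"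
    have x: "x \<in> {0..L}" using clI by (simp add: x_def)
    define d where "d = dist \<eta>1 \<eta>2"
    have d0: "0 \<le> d" by (simp add: d_def)
    define g1 where "g1 = (\<lambda>s. G s (apply_bcontfun \<eta>1 s / w s))"
    define g2 where "g2 = (\<lambda>s. G s (apply_bcontfun \<eta>2 s / w s))"
    have sub: "{x..L} \<subseteq> {0..L}" using x by auto
    have int1: "g1 integrable_on {x..L}" unfolding g1_def
      by (rule integrable_continuous_interval[OF continuous_on_subset[OF gcont sub]])
    have int2: "g2 integrable_on {x..L}" unfolding g2_def
      by (rule integrable_continuous_interval[OF continuous_on_subset[OF gcont sub]])
    have Iexp: "((\<lambda>s. K * d * exp (lam * (L - s))) has_integral (K * d * ((exp (lam * (L - x)) - 1) / lam))) {x..L}"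
      using exp_integral[OF lam(1), of x L] x by (intro has_integral_mult_right) auto
    have bnd: "norm (g1 s - g2 s) \<le> K * d * exp (lam * (L - s))" if s: "s \<in> {x..L}" for s
    proof -
      have "\<bar>g1 s - g2 s\<bar> \<le> K * \<bar>apply_bcontfun \<eta>1 s / w s - apply_bcontfun \<eta>2 s / w s\<bar>"
        unfolding g1_def g2_def using Glip s sub by blast
      also have "\<bar>apply_bcontfun \<eta>1 s / w s - apply_bcontfun \<eta>2 s / w s\<bar>
          = dist (apply_bcontfun \<eta>1 s) (apply_bcontfun \<eta>2 s) / w s"
        using wpos[of s] by (simp add: dist_real_def diff_divide_distrib[symmetric] abs_div)
      also have "\<dots> \<le> d / w s"
        using wpos[of s] dist_bounded[of \<eta>1 s \<eta>2] by (simp add: d_def divide_right_mono)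
      also have "d / w s = d * exp (lam * (L - s))" by (rule wdiv)
      finally show ?thesis using K by (simp add: mult.assoc mult_left_mono)
    qed
    have "norm (integral {x..L} (\<lambda>s. g1 s - g2 s)) \<le> integral {x..L} (\<lambda>s. K * d * exp (lam * (L - s)))"
      by (rule integral_norm_bound_integral[OF integrable_diff[OF int1 int2] has_integral_integrable[OF Iexp] bnd])
    also have "\<dots> = K * d * ((exp (lam * (L - x)) - 1) / lam)" using Iexp by (rule integral_unique)
    finally have ib: "\<bar>integral {x..L} g1 - integral {x..L} g2\<bar> \<le> K * d * ((exp (lam * (L - x)) - 1) / lam)"
      using integral_diff[OF int1 int2] by simp
    have eqT: "T \<eta>1 x - T \<eta>2 x = w x * (integral {x..L} g2 - integral {x..L} g1)"
      unfolding T_def g1_def g2_def by (simp add: algebra_simps)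
    have "dist (apply_bcontfun (\<Phi> \<eta>1) y) (apply_bcontfun (\<Phi> \<eta>2) y) = \<bar>T \<eta>1 x - T \<eta>2 x\<bar>"
      by (simp add: \<Phi>app x_def dist_real_def)
    also have "\<dots> = w x * \<bar>integral {x..L} g1 - integral {x..L} g2\<bar>"
      unfolding eqT using wpos[of x] by (simp add: abs_mult abs_minus_commute)
    also have "\<dots> \<le> w x * (K * d * ((exp (lam * (L - x)) - 1) / lam))"
      using mult_left_mono[OF ib, of "w x"] wpos[of x] by simp
    also have "\<dots> = K * d * ((1 - w x) / lam)"
    proof -
      have "w x * exp (lam * (L - x)) = 1" by (rule wexp)
      then show ?thesis using lam by (simp add: field_simps)
    qed
    also have "\<dots> \<le> K * d * (1 / lam)"
      using wpos[of x] lam K d0 by (intro mult_left_mono divide_right_mono) auto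
    also have "\<dots> \<le> (1/2) * d"
    proof -
      have "K / lam \<le> 1/2" using lam by (simp add: divide_le_eq)
      then have "K / lam * d \<le> 1/2 * d" using d0 by (rule mult_right_mono)
      then show ?thesis by simp
    qed
    finally show "dist (apply_bcontfun (\<Phi> \<eta>1) y) (apply_bcontfun (\<Phi> \<eta>2) y) \<le> 1 / 2 * dist \<eta>1 \<eta>2"
      by (simp add: d_def)
  qed
  obtain \<eta> where fixp: "\<Phi> \<eta> = \<eta>" using banach_fix_type[of "1/2" \<Phi>] contr by auto
  define \<rho> where "\<rho> = (\<lambda>y. apply_bcontfun \<eta> y / w y)"
  show ?thesis
  proof (intro exI conjI ballI)
    show "continuous_on {0..L} \<rho>" unfolding \<rho>_def by (rule cdiv)
    fix y assume y: "y \<in> {0..L}"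
    have "apply_bcontfun \<eta> y = T \<eta> y" using \<Phi>app[of \<eta> y] fixp cl_id[OF y] by simp
    then show "\<rho> y = \<rho>L - integral {y..L} (\<lambda>s. G s (\<rho> s))"
      unfolding \<rho>_def T_def using wne[of y] by simp
  qed
qed

lemma ivp_deriv:
  fixes g \<rho> :: "real \<Rightarrow> real"
  assumes g: "continuous_on {0..L} g" and eq: "\<forall>y\<in>{0..L}. \<rho> y = \<rho>L - integral {y..L} g"
    and y: "0 < y" "y < L"
  shows "(\<rho> has_real_derivative g y) (at y)"
proof -
  have yI: "y \<in> {0..L}" using y by auto
  have "((\<lambda>x. integral {x..L} g) has_real_derivative (- g y)) (at y within {0..L})"
    by (rule integral_has_real_derivative'[OF g yI])
  from DERIV_diff[OF DERIV_const[of \<rho>L] this]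
  have "((\<lambda>x. \<rho>L - integral {x..L} g) has_real_derivative g y) (at y within {0..L})"
    by simp
  then have "(\<rho> has_real_derivative g y) (at y within {0..L})"
    by (rule has_field_derivative_transform_within[of _ _ _ _ 1]) (use yI eq in auto)
  then show ?thesis using y by (simp add: at_within_Icc_at)
qed



lemma uniq:
  fixes F :: "real \<Rightarrow> real \<Rightarrow> real" and \<rho> \<sigma> :: "real \<Rightarrow> real" and L Lc r0 :: real
  assumes L: "0 < L"
    and Flip: "\<And>y r1 r2. y \<in> {0..L} \<Longrightarrow> r0 \<le> r1 \<Longrightarrow> r0 \<le> r2 \<Longrightarrow> \<bar>F y r1 - F y r2\<bar> \<le> Lc * \<bar>r1 - r2\<bar>"
    and c\<rho>: "continuous_on {0..L} \<rho>" and c\<sigma>: "continuous_on {0..L} \<sigma>"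
    and d\<rho>: "\<And>y. 0 < y \<Longrightarrow> y < L \<Longrightarrow> (\<rho> has_real_derivative F y (\<rho> y)) (at y)"
    and d\<sigma>: "\<And>y. 0 < y \<Longrightarrow> y < L \<Longrightarrow> (\<sigma> has_real_derivative F y (\<sigma> y)) (at y)"
    and big: "\<forall>y\<in>{0..L}. r0 < \<rho> y"
    and eqL: "\<sigma> L = \<rho> L"
  shows "\<forall>y\<in>{0..L}. \<sigma> y = \<rho> y"
proof (rule ccontr)
  assume "\<not> (\<forall>y\<in>{0..L}. \<sigma> y = \<rho> y)"
  define S where "S = {t \<in> {0..L}. \<sigma> t \<noteq> \<rho> t}"
  have Sne: "S \<noteq> {}" using \<open>\<not> _\<close> by (auto simp: S_def)
  have Sbdd: "bdd_above S" by (rule bdd_aboveI[of _ L]) (auto simp: S_def)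
  define y1 where "y1 = Sup S"
  have y1L: "y1 \<le> L" unfolding y1_def using Sne by (intro cSup_least) (auto simp: S_def)
  obtain s0 where s0: "s0 \<in> S" using Sne by blast
  have s0y1: "s0 \<le> y1" unfolding y1_def using s0 Sbdd by (rule cSup_upper)
  have y10: "0 \<le> y1" using s0 s0y1 by (auto simp: S_def)
  have agree: "\<sigma> t = \<rho> t" if "t \<in> {0..L}" "y1 < t" for t
  proof (rule ccontr)
    assume "\<sigma> t \<noteq> \<rho> t"
    then have "t \<in> S" using that by (auto simp: S_def)
    then have "t \<le> y1" unfolding y1_def using Sbdd by (rule cSup_upper)
    then show False using that by simp
  qed
  have cd: "continuous_on {0..L} (\<lambda>t. \<sigma> t - \<rho> t)" by (intro continuous_intros c\<rho> c\<sigma>)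
  have eq1: "\<sigma> y1 = \<rho> y1"
  proof (cases "y1 = L")
    case True then show ?thesis using eqL by simp
  next
    case False
    then have y1L': "y1 < L" using y1L by simp
    show ?thesis
    proof (rule ccontr)
      assume ne: "\<sigma> y1 \<noteq> \<rho> y1"
      have "y1 \<in> {0..L}" using y10 y1L by simp
      then obtain \<delta> where \<delta>: "\<delta> > 0" "\<forall>x'\<in>{0..L}. dist x' y1 < \<delta> \<longrightarrow>
          dist (\<sigma> x' - \<rho> x') (\<sigma> y1 - \<rho> y1) < \<bar>\<sigma> y1 - \<rho> y1\<bar>"
        using cd ne unfolding continuous_on_iff by (metis zero_less_abs_iff right_minus_eq)
      define m where "m = min \<delta> (L - y1)"
      have m: "0 < m" "m \<le> \<delta>" "m \<le> L - y1"
        using \<delta> y1L' by (auto simp: m_def)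
      define t where "t = y1 + m / 2"
      have t: "y1 < t" "t \<le> L" "dist t y1 < \<delta>"
        using m unfolding t_def dist_real_def by auto
      have tI: "t \<in> {0..L}" using t y10 by auto
      have "\<sigma> t - \<rho> t = 0" using agree[OF tI t(1)] by simp
      moreover have "dist (\<sigma> t - \<rho> t) (\<sigma> y1 - \<rho> y1) < \<bar>\<sigma> y1 - \<rho> y1\<bar>"
        using \<delta>(2) tI t(3) by blast
      ultimately show False by (simp add: dist_real_def)
    qed
  qed
  have y1pos: "0 < y1"
  proof (rule ccontr)
    assume "\<not> 0 < y1"
    then have "s0 = y1" using s0 s0y1 y10 by (auto simp: S_def)
    then show False using s0 eq1 by (simp add: S_def)
  qed
  have y1I: "y1 \<in> {0..L}" using y1pos y1L by simp
  have r0y1: "r0 < \<sigma> y1" using big y1I eq1 by simp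
  obtain \<delta> where \<delta>: "\<delta> > 0" "\<forall>x'\<in>{0..L}. dist x' y1 < \<delta> \<longrightarrow> dist (\<sigma> x') (\<sigma> y1) < \<sigma> y1 - r0"
    using c\<sigma> y1I r0y1 unfolding continuous_on_iff by (metis diff_gt_0_iff_gt)
  define a1 where "a1 = max (y1 - \<delta> / 2) (y1 / 2)"
  have a1: "0 < a1" "a1 < y1" using y1pos \<delta> by (auto simp: a1_def)
  have \<sigma>big: "r0 \<le> \<sigma> t" if "a1 \<le> t" "t \<le> y1" for t
  proof -
    have tI: "t \<in> {0..L}" using that a1 y1L by auto
    have "dist t y1 < \<delta>" using that \<delta> by (auto simp: a1_def dist_real_def)
    then have "dist (\<sigma> t) (\<sigma> y1) < \<sigma> y1 - r0" using \<delta>(2) tI by blast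
    then show ?thesis by (auto simp: dist_real_def)
  qed
  define g where "g = (\<lambda>t. (\<sigma> t - \<rho> t)^2 * exp (2 * Lc * t))"
  have gmono: "g t \<le> g y1" if t: "a1 \<le> t" "t \<le> y1" for t
  proof (rule DERIV_nonneg_imp_increasing_open[of t y1 g])
    show "t \<le> y1" by fact
    show "continuous_on {t..y1} g" unfolding g_def
      by (intro continuous_intros continuous_on_subset[OF c\<rho>] continuous_on_subset[OF c\<sigma>]) (use t a1 y1L in auto)
    fix z assume z: "t < z" "z < y1"
    have z0: "0 < z" "z < L" using z t a1 y1L by auto
    define u where "u = \<sigma> z - \<rho> z"
    define v where "v = F z (\<sigma> z) - F z (\<rho> z)"
    have "(g has_real_derivative (2 * u * v * exp (2 * Lc * z) + u^2 * (exp (2 * Lc * z) * (2 * Lc)))) (at z)"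
      unfolding g_def u_def v_def using d\<sigma>[OF z0] d\<rho>[OF z0]
      by (auto intro!: derivative_eq_intros simp: algebra_simps power2_eq_square)
    moreover have "0 \<le> 2 * u * v * exp (2 * Lc * z) + u^2 * (exp (2 * Lc * z) * (2 * Lc))"
    proof -
      have zI: "z \<in> {0..L}" using z0 by simp
      have "\<bar>v\<bar> \<le> Lc * \<bar>u\<bar>" unfolding u_def v_def
        using Flip[OF zI \<sigma>big[of z] less_imp_le[OF bspec[OF big zI]]] z t by simp
      then have "\<bar>u\<bar> * \<bar>v\<bar> \<le> \<bar>u\<bar> * (Lc * \<bar>u\<bar>)" by (simp add: mult_left_mono)
      then have "\<bar>u * v\<bar> \<le> Lc * u^2" by (simp add: abs_mult power2_eq_square mult_ac)
      then have "0 \<le> u * v + Lc * u^2" by linarith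
      then have "0 \<le> (2 * exp (2 * Lc * z)) * (u * v + Lc * u^2)" by simp
      then show ?thesis by (simp add: algebra_simps)
    qed
    ultimately show "\<exists>l. (g has_real_derivative l) (at z) \<and> 0 \<le> l" by blast
  qed
  have zero: "\<sigma> t = \<rho> t" if "a1 \<le> t" "t \<le> y1" for t
  proof -
    have "g t \<le> 0" using gmono[OF that] eq1 by (simp add: g_def)
    moreover have "0 \<le> g t" by (simp add: g_def)
    ultimately have "g t = 0" by simp
    then show ?thesis by (simp add: g_def)
  qed
  have "a1 < Sup S" using a1 by (simp add: y1_def)
  then obtain s where s: "s \<in> S" "a1 < s" using less_cSup_iff[OF Sne Sbdd] by blast
  have "s \<le> y1" unfolding y1_def using s(1) Sbdd by (rule cSup_upper)
  then have "\<sigma> s = \<rho> s" using zero s(2) by simp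
  then show False using s(1) by (simp add: S_def)
qed



theorem proposition3:
  fixes L \<phi> \<kappa>f \<kappa>s hv cpf mc Ac R \<mu>f KD KF pHG Tb qHG :: real
    and Tf Ts Tf' Ts' Tf'' Ts'' :: "real \<Rightarrow> real"
  assumes L: "0 < L"
    and phi: "0 < \<phi>" "\<phi> < 1"
    and pos: "0 < \<kappa>f" "0 < \<kappa>s" "0 < hv" "0 < cpf" "0 < mc" "0 < Ac" "0 < R"
             "0 < \<mu>f" "0 < KD" "0 < KF" "0 < pHG" "0 < Tb"
    and dTf: "\<And>y. y \<in> {0..L} \<Longrightarrow> (Tf has_real_derivative Tf' y) (at y within {0..L})"
    and dTs: "\<And>y. y \<in> {0..L} \<Longrightarrow> (Ts has_real_derivative Ts' y) (at y within {0..L})"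
    and ddTf: "\<And>y. y \<in> {0<..<L} \<Longrightarrow> (Tf' has_real_derivative Tf'' y) (at y)"
    and ddTs: "\<And>y. y \<in> {0<..<L} \<Longrightarrow> (Ts' has_real_derivative Ts'' y) (at y)"
    and ode_f: "\<And>y. y \<in> {0<..<L} \<Longrightarrow>
                 - \<phi> * \<kappa>f * Tf'' y + cpf * (mc / Ac) * Tf' y = hv * (Ts y - Tf y)"
    and ode_s: "\<And>y. y \<in> {0<..<L} \<Longrightarrow>
                 (1 - \<phi>) * \<kappa>s * Ts'' y = hv * (Ts y - Tf y)"
    and bc0: "Tf 0 = Tb" "Ts 0 = Tb"
    and bcL_s: "(1 - \<phi>) * \<kappa>s * Ts' L = qHG - cpf * (mc / Ac) * (Ts L - Tf L)"
    and bcL_f: "Tf' L = hv * Ac / (cpf * mc) * (Ts L - Tf L)"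
    and qHG: "0 < qHG"
    and super: "pHG / (R * Tf L) > mc / (\<phi> * Ac) * (1 / sqrt (R * Tb))"
  shows "\<exists>\<rho>. density_solution L \<phi> cpf mc Ac R \<mu>f KD KF hv Tf Ts (pHG / (R * Tf L)) \<rho>
           \<and> (\<forall>\<sigma>. density_solution L \<phi> cpf mc Ac R \<mu>f KD KF hv Tf Ts (pHG / (R * Tf L)) \<sigma>
                   \<longrightarrow> (\<forall>y\<in>{0..L}. \<sigma> y = \<rho> y))
           \<and> (\<forall>y\<in>{0..L}. 0 < \<rho> y)
           \<and> (\<forall>x\<in>{0..L}. \<forall>y\<in>{0..L}. x < y \<longrightarrow> \<rho> y < \<rho> x)"
proof -
  define \<alpha> where "\<alpha> = \<phi> * \<kappa>f"
  define \<beta> where "\<beta> = (1 - \<phi>) * \<kappa>s"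
  define a where "a = cpf * (mc / Ac)"
  have pa: "0 < \<alpha>" "0 < \<beta>" "0 < a" using phi pos by (simp_all add: \<alpha>_def \<beta>_def a_def)
  have odef: "\<alpha> * Tf'' y = a * Tf' y - hv * (Ts y - Tf y)" if "y \<in> {0<..<L}" for y
    using ode_f[OF that] unfolding \<alpha>_def a_def by (simp add: algebra_simps)
  have odes: "\<beta> * Ts'' y = hv * (Ts y - Tf y)" if "y \<in> {0<..<L}" for y
    using ode_s[OF that] unfolding \<beta>_def by simp
  have bcs: "\<beta> * Ts' L = qHG - a * (Ts L - Tf L)" using bcL_s by (simp add: \<beta>_def a_def)
  have bcf: "a * Tf' L = hv * (Ts L - Tf L)" using bcL_f pos by (simp add: a_def field_simps)
  have TfTb: "\<forall>y\<in>{0..L}. Tb \<le> Tf y"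
    by (rule temp_lower[OF L pa pos(3) qHG dTf dTs ddTf ddTs odef odes bc0 bcs bcf])
  have th0: "\<forall>y\<in>{0..L}. Tf y \<le> Ts y"
    by (rule temp_theta[OF L pa pos(3) qHG dTf dTs ddTf ddTs odef odes bc0 bcs bcf])
  have ctf: "continuous_on {0..L} Tf" using dTf by (rule DERIV_continuous_on)
  have cts: "continuous_on {0..L} Ts" using dTs by (rule DERIV_continuous_on)
  define Kc where "Kc = R * inverse (cpf * mc) * hv * Ac"
  define M where "M = (mc / Ac) * (\<mu>f / KD + mc / (KF * Ac))"
  define A2 where "A2 = inverse (\<phi>^2) * (mc / Ac)^2"
  define \<rho>L where "\<rho>L = pHG / (R * Tf L)"
  define A0 where "A0 = mc / (\<phi> * Ac) * (1 / sqrt (R * Tb))"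
  have Kc: "0 \<le> Kc" using pos by (simp add: Kc_def)
  have M: "0 < M"
  proof -
    have "0 < \<mu>f / KD + mc / (KF * Ac)" using pos by (intro add_pos_pos divide_pos_pos mult_pos_pos) auto
    moreover have "0 < mc / Ac" using pos by simp
    ultimately show ?thesis unfolding M_def by (rule mult_pos_pos[rotated])
  qed
  have A2: "0 \<le> A2" by (simp add: A2_def)
  have A0: "0 < A0" using pos phi by (simp add: A0_def)
  have RTb: "0 < R * Tb" using pos by simp
  have A2eq: "A2 = R * Tb * A0^2"
  proof -
    have "(sqrt (R * Tb))^2 = R * Tb" using RTb by simp
    then show ?thesis using RTb phi pos
      unfolding A2_def A0_def by (simp add: power_mult_distrib power_divide field_simps)
  qed
  have A0\<rho>: "A0 < \<rho>L" using super by (simp add: A0_def \<rho>L_def)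
  define r0 where "r0 = (A0 + \<rho>L) / 2"
  have r0: "0 < r0" "A0 < r0" "r0 < \<rho>L" using A0 A0\<rho> by (auto simp: r0_def)
  define \<gamma> where "\<gamma> = 1 - A0^2 / r0^2"
  have "A0^2 < r0^2" using A0 r0 by (simp add: power_strict_mono)
  then have \<gamma>: "0 < \<gamma>" "\<gamma> \<le> 1" using r0 by (auto simp: \<gamma>_def)
  have Acond: "A2 \<le> (1 - \<gamma>) * (R * Tb) * r0^2"
    using r0 by (simp add: \<gamma>_def A2eq field_simps)
  have cth: "continuous_on {0..L} (\<lambda>y. Ts y - Tf y)" by (intro continuous_intros ctf cts)
  have ne: "{0..L} \<noteq> {}" using L by simp
  obtain ym where ym: "ym \<in> {0..L}" "\<forall>y\<in>{0..L}. Ts y - Tf y \<le> Ts ym - Tf ym"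
    using continuous_attains_sup[OF compact_Icc ne cth] by blast
  define B where "B = Ts ym - Tf ym"
  define F where "F = (\<lambda>y r. Nbar \<phi> cpf mc Ac R \<mu>f KD KF hv Tf Ts y r * r)"
  have Feq: "F y r = Fa Kc (Ts y - Tf y) M A2 (R * Tf y) r" for y r
    by (simp add: F_def Fa_def Nbar_def Kc_def M_def A2_def)
  define Lc where "Lc = Kc * B / (R * Tb) + (Kc * B * A2 / (R * Tb) + M)
        * (A2 / (\<gamma> * (R * Tb) * r0^2)^2 + 1 / (\<gamma>^2 * (R * Tb) * r0^2))"
  have qm: "R * Tb \<le> R * Tf y" if "y \<in> {0..L}" for y using TfTb that pos by simp
  have Flip: "\<bar>F y r1 - F y r2\<bar> \<le> Lc * \<bar>r1 - r2\<bar>" if "y \<in> {0..L}" "r0 \<le> r1" "r0 \<le> r2" for y r1 r2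
    unfolding Feq Lc_def
    by (rule Fa_lip[OF qm[OF that(1)] RTb \<gamma> A2 Acond r0(1) that(2,3) Kc])
       (use th0 that ym less_imp_le[OF M] in \<open>auto simp: B_def\<close>)
  have Lc0: "0 \<le> Lc" using Flip[of 0 r0 "r0 + 1"] L by simp
  have Fden: "\<gamma> * (R * Tf y) * r^2 \<le> - (A2 - R * Tf y * r^2)" if "y \<in> {0..L}" "r0 \<le> r" for y r
  proof (rule Fa_denom[OF _ \<gamma> _ r0(1) that(2)])
    show "0 < R * Tf y" using RTb qm[OF that(1)] by linarith
    have "(1 - \<gamma>) * (R * Tb) * r0^2 \<le> (1 - \<gamma>) * (R * Tf y) * r0^2"
      using mult_right_mono[OF mult_left_mono[OF qm[OF that(1)], of "1 - \<gamma>"], of "r0^2"] \<gamma> by simp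
    then show "A2 \<le> (1 - \<gamma>) * (R * Tf y) * r0^2" using Acond by linarith
  qed
  have Fden': "A2 - R * Tf y * r^2 < 0" if "y \<in> {0..L}" "r0 \<le> r" for y r
  proof -
    have "0 < R * Tf y" using RTb qm[OF that(1)] by linarith
    then have "0 < \<gamma> * (R * Tf y) * r^2" using \<gamma> r0 that by simp
    then show ?thesis using Fden[OF that] by linarith
  qed
  have Fneg: "F y r < 0" if "y \<in> {0..L}" "r0 \<le> r" for y r
  proof -
    have "A2 \<le> (1 - \<gamma>) * (R * Tf y) * r0^2"
    proof -
      have "(1 - \<gamma>) * (R * Tb) * r0^2 \<le> (1 - \<gamma>) * (R * Tf y) * r0^2"
        using mult_right_mono[OF mult_left_mono[OF qm[OF that(1)], of "1 - \<gamma>"], of "r0^2"] \<gamma> by simp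
      then show ?thesis using Acond by linarith
    qed
    moreover have "0 < R * Tf y" using RTb qm[OF that(1)] by linarith
    ultimately show ?thesis unfolding Feq
      by (intro Fa_neg[OF _ \<gamma> _ r0(1) that(2) Kc _ M]) (use th0 that in auto)
  qed
  define G where "G = (\<lambda>y r. F y (max r r0))"
  have Glip: "\<bar>G y r1 - G y r2\<bar> \<le> Lc * \<bar>r1 - r2\<bar>" if "y \<in> {0..L}" for y r1 r2
  proof -
    have "\<bar>G y r1 - G y r2\<bar> \<le> Lc * \<bar>max r1 r0 - max r2 r0\<bar>"
      unfolding G_def by (rule Flip[OF that]) auto
    also have "\<dots> \<le> Lc * \<bar>r1 - r2\<bar>"
      using Lc0 by (intro mult_left_mono) (auto simp: max_def abs_if)
    finally show ?thesis .
  qed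
  have Gcont: "continuous_on {0..L} (\<lambda>s. G s (\<rho> s))" if c: "continuous_on {0..L} \<rho>" for \<rho>
  proof -
    have "continuous_on {0..L} (\<lambda>s. Fa Kc (Ts s - Tf s) M A2 (R * Tf s) (max (\<rho> s) r0))"
    proof -
      have nz: "\<forall>s\<in>{0..L}. A2 - R * Tf s * (max (\<rho> s) r0)^2 \<noteq> 0"
      proof
        fix s assume "s \<in> {0..L}"
        have "A2 - R * Tf s * (max (\<rho> s) r0)^2 < 0" by (rule Fden'[OF \<open>s \<in> {0..L}\<close> max.cobounded2])
        then show "A2 - R * Tf s * (max (\<rho> s) r0)^2 \<noteq> 0" by simp
      qed
      show ?thesis unfolding Fa_def by (intro continuous_intros c ctf cts nz)
    qed
    then show ?thesis by (simp add: G_def Feq)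
  qed
  obtain \<rho> where \<rho>c: "continuous_on {0..L} \<rho>"
      and \<rho>eq: "\<forall>y\<in>{0..L}. \<rho> y = \<rho>L - integral {y..L} (\<lambda>s. G s (\<rho> s))"
    using ivp_exists[OF L Lc0 Gcont Glip, of \<rho>L] by blast
  have gc: "continuous_on {0..L} (\<lambda>s. G s (\<rho> s))" by (rule Gcont[OF \<rho>c])
  have Gneg: "G s (\<rho> s) < 0" if "s \<in> {0..L}" for s
    unfolding G_def using Fneg[OF that] by simp
  have \<rho>ge: "\<rho>L \<le> \<rho> y" if y: "y \<in> {0..L}" for y
  proof -
    have sub: "{y..L} \<subseteq> {0..L}" using y by auto
    have "(\<lambda>s. - G s (\<rho> s)) integrable_on {y..L}"
      by (intro integrable_continuous_interval continuous_intros continuous_on_subset[OF gc sub])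
    then have "0 \<le> integral {y..L} (\<lambda>s. - G s (\<rho> s))"
      by (rule integral_nonneg) (use Gneg sub in \<open>auto simp: less_imp_le\<close>)
    then have "integral {y..L} (\<lambda>s. G s (\<rho> s)) \<le> 0" by (simp add: integral_neg)
    then show ?thesis using \<rho>eq y by auto
  qed
  have \<rho>big: "r0 < \<rho> y" if "y \<in> {0..L}" for y using \<rho>ge[OF that] r0 by linarith
  have GF: "G y (\<rho> y) = F y (\<rho> y)" if "y \<in> {0..L}" for y
    using \<rho>big[OF that] by (simp add: G_def max_def)
  have d\<rho>: "(\<rho> has_real_derivative F y (\<rho> y)) (at y)" if "0 < y" "y < L" for y
    using ivp_deriv[OF gc \<rho>eq that] GF[of y] that by simp
  have \<rho>Lval: "\<rho> L = \<rho>L" using \<rho>eq L by simp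
  have \<rho>pos: "0 < \<rho> y" if "y \<in> {0..L}" for y using \<rho>big[OF that] r0 by linarith
  have sol: "density_solution L \<phi> cpf mc Ac R \<mu>f KD KF hv Tf Ts (pHG / (R * Tf L)) \<rho>"
    unfolding density_solution_def
  proof (intro conjI ballI)
    show "continuous_on {0..L} \<rho>" by (rule \<rho>c)
    show "\<rho> L = pHG / (R * Tf L)" using \<rho>Lval by (simp add: \<rho>L_def)
    fix y assume y: "y \<in> {0<..<L}"
    then have yI: "y \<in> {0..L}" by auto
    show "inverse (\<phi>^2) * (mc / Ac)^2 - R * Tf y * (\<rho> y)^2 \<noteq> 0"
      using Fden'[OF yI less_imp_le[OF \<rho>big[OF yI]]] by (simp add: A2_def)
    show "(\<rho> has_real_derivative Nbar \<phi> cpf mc Ac R \<mu>f KD KF hv Tf Ts y (\<rho> y) * \<rho> y) (at y)"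
      using d\<rho>[of y] y by (simp add: F_def)
  qed
  have uniqp: "\<forall>y\<in>{0..L}. \<sigma> y = \<rho> y"
    if s: "density_solution L \<phi> cpf mc Ac R \<mu>f KD KF hv Tf Ts (pHG / (R * Tf L)) \<sigma>" for \<sigma>
  proof (rule uniq[OF L Flip \<rho>c _ d\<rho>])
    show "continuous_on {0..L} \<sigma>" using s by (simp add: density_solution_def)
    show "(\<sigma> has_real_derivative F y (\<sigma> y)) (at y)" if "0 < y" "y < L" for y
      using s that by (simp add: density_solution_def F_def)
    show "\<forall>y\<in>{0..L}. r0 < \<rho> y" using \<rho>big by blast
    show "\<sigma> L = \<rho> L" using s \<rho>Lval by (simp add: density_solution_def \<rho>L_def)
  qed auto
  have mono: "\<rho> y < \<rho> x" if "x \<in> {0..L}" "y \<in> {0..L}" "x < y" for x y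
  proof -
    have "continuous_on {x..y} \<rho>" using \<rho>c by (rule continuous_on_subset) (use that in auto)
    moreover have "\<rho> differentiable (at z)" if "x < z" "z < y" for z
      using d\<rho>[of z] that \<open>x \<in> {0..L}\<close> \<open>y \<in> {0..L}\<close> by (auto simp: real_differentiable_def)
    ultimately obtain l z where z: "x < z" "z < y" "(\<rho> has_real_derivative l) (at z)"
        "\<rho> y - \<rho> x = (y - x) * l"
      using MVT[OF \<open>x < y\<close>] by blast
    have zI: "0 < z" "z < L" using z that by auto
    have "l = F z (\<rho> z)" using DERIV_unique[OF z(3) d\<rho>[OF zI]] .
    then have "l < 0" using Fneg[of z "\<rho> z"] \<rho>big[of z] zI by simp
    then have "(y - x) * l < 0" using \<open>x < y\<close> by (simp add: mult_pos_neg)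
    then show ?thesis using z(4) by linarith
  qed
  show ?thesis using sol uniqp \<rho>pos mono by blast
qed


end
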